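(* Let $q$ be a prime power, $e\in\{0,1,2\}$, $r$ an integer ($r$ odd if $e\in\{0,2\}$, $r$ even if $e=1$), and let $\{\Sigma_1,\dots,\Sigma_{N+1}\}$, $N=q^{\frac{r+e+1}{2}}$, be a spread of a non-degenerate quadric $\mathcal Q_{r+2,e}$ of ${\rm PG}(r+2,q)$ with associated polarity $\perp$. Fix a point $P\in\Sigma_{N+1}$ and a hyperplane $\mathcal U\cong{\rm PG}(r+1,q)$ of ${\rm PG}(r+2,q)$ with $P\notin\mathcal U$. Put $H=\mathcal U\cap P^\perp$ (an $r$-space, a hyperplane of $\mathcal U$), and $S_i=\langle P,\Sigma_i\rangle\cap\mathcal U$ for $i=1,\dots,N$. Then $\mathcal P=\{S_1,\dots,S_N\}$ is a hyperbolic, parabolic or elliptic avsp of $\mathcal U$ (with respect to the hyperplane $H$ and the quadric $\mathcal Q_{r,e}=H\cap\mathcal Q_{r+2,e}$, with fixed generator $\Pi=\Sigma_{N+1}\cap H$), according as $e=0,1,2$ respectively.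
   Context: Notation: $\mathcal Q_{m,e}$ denotes a non-degenerate quadric of ${\rm PG}(m,q)$ which is hyperbolic $\mathcal Q^+(m,q)$ if $e=0$ ($m$ odd), parabolic $\mathcal Q(m,q)$ if $e=1$ ($m$ even), elliptic $\mathcal Q^-(m,q)$ if $e=2$ ($m$ odd). The polarity $\perp$ associated with the quadric is the one defined by the polar (bilinear) form of the quadratic form; for a point $P$ of the quadric, $P^\perp$ is its tangent hyperplane. A generator of $\mathcal Q_{m,e}$ is a projective subspace of maximal dimension contained in it; generators are $\frac{m-e-1}{2}$-dimensional. A spread of $\mathcal Q_{m,e}$ is a set of $q^{\frac{m+e-1}{2}}+1$ pairwise disjoint generators. An $s$-space means an $s$-dimensional projective subspace. Affine vector space partition (avsp): given a hyperplane $H$ of ${\rm PG}(r+1,q)$, an avsp (with respect to $H$) is a set $\mathcal P$ of subspaces, none contained in $H$, such that every point of ${\rm PG}(r+1,q)\setminus H$ lies in exactly one member of $\mathcal P$. Hyperbolic/parabolic/elliptic avsp: with $e=0,1,2$ respectively, an avsp $\mathcal P=\{S_1,\dots,S_N\}$ of ${\rm PG}(r+1,q)$ with respect to $H$, where $N=q^{\frac{r+e+1}{2}}$ and every $S_i$ is a $\frac{r-e+1}{2}$-space, such that the sets $\Pi_i=S_i\cap H$ are $N$ generators of a non-degenerate quadric $\mathcal Q_{r,e}\subset H$ with: (1) each $\Pi_i$ disjoint from a fixed generator $\Pi$ of $\mathcal Q_{r,e}$; (2) distinct $S_i,S_j$ meet in at most one point, and distinct $\Pi_i,\Pi_j$ meet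 in at most one point; (3) if $|\Pi_i\cap\Pi_j|=1$, then $\langle S_i,S_j\rangle\cap\mathcal Q_{r,e}$ is a non-degenerate hyperbolic quadric $\mathcal Q^+(r-e,q)$. *)

theory Defs
  imports "HOL-Analysis.Analysis"
begin

text \<open>Vector-space model of PG(n-1,q): the ambient space is the vector space
  'a^'n over a finite field 'a (q = CARD('a)); projective subspaces are linear
  subspaces (the projective dimension is vec.dim - 1); points are 1-dimensional
  subspaces.\<close>

definition quadratic_form :: "('a::field ^ 'n \<Rightarrow> 'a) \<Rightarrow> bool" where
  "quadratic_form Q \<longleftrightarrow> (\<exists>A :: 'a ^ 'n ^ 'n. \<forall>v. Q v = (\<Sum>i\<in>UNIV. \<Sum>j\<in>UNIV. A $ i $ j * v $ i * v $ j))"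

definition polar :: "('a::field ^ 'n \<Rightarrow> 'a) \<Rightarrow> 'a ^ 'n \<Rightarrow> 'a ^ 'n \<Rightarrow> 'a" where
  "polar Q u v = Q (u + v) - Q u - Q v"

definition perp :: "('a::field ^ 'n \<Rightarrow> 'a) \<Rightarrow> ('a ^ 'n) set \<Rightarrow> ('a ^ 'n) set" where
  "perp Q X = {v. \<forall>u\<in>X. polar Q u v = 0}"

definition totally_singular :: "('a::field ^ 'n \<Rightarrow> 'a) \<Rightarrow> ('a ^ 'n) set \<Rightarrow> bool" where
  "totally_singular Q G \<longleftrightarrow> (\<forall>v\<in>G. Q v = 0)"

definition nondeg_on :: "('a::field ^ 'n \<Rightarrow> 'a) \<Rightarrow> ('a ^ 'n) set \<Rightarrow> bool" where
  "nondeg_on Q W \<longleftrightarrow> (\<forall>v\<in>W. v \<noteq> 0 \<and> Q v = 0 \<longrightarrow> (\<exists>w\<in>W. polar Q v w \<noteq> 0))"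

definition witt_index :: "('a::field ^ 'n \<Rightarrow> 'a) \<Rightarrow> ('a ^ 'n) set \<Rightarrow> nat" where
  "witt_index Q W = Max {vec.dim G | G. vec.subspace G \<and> G \<subseteq> W \<and> totally_singular Q G}"

definition generator :: "('a::field ^ 'n \<Rightarrow> 'a) \<Rightarrow> ('a ^ 'n) set \<Rightarrow> ('a ^ 'n) set \<Rightarrow> bool" where
  "generator Q W G \<longleftrightarrow> vec.subspace G \<and> G \<subseteq> W \<and> totally_singular Q G \<and> vec.dim G = witt_index Q W"

text \<open>quadric_type Q W m e: Q restricted to the projective m-space W (vector dimension
  m+1) is a non-degenerate quadric Q_{m,e}: hyperbolic (e=0, m odd), parabolic (e=1,
  m even), elliptic (e=2, m odd), i.e. its generators are (m-e-1)/2-dimensional.\<close>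
definition quadric_type :: "('a::field ^ 'n \<Rightarrow> 'a) \<Rightarrow> ('a ^ 'n) set \<Rightarrow> nat \<Rightarrow> nat \<Rightarrow> bool" where
  "quadric_type Q W m e \<longleftrightarrow> e \<le> 2 \<and> odd (m + e) \<and> vec.subspace W \<and> vec.dim W = m + 1
     \<and> nondeg_on Q W \<and> witt_index Q W = (m + 1 - e) div 2"

definition avsp :: "('a::field ^ 'n) set \<Rightarrow> ('a ^ 'n) set \<Rightarrow> (nat \<Rightarrow> ('a ^ 'n) set) \<Rightarrow> nat set \<Rightarrow> bool" where
  "avsp U H S I \<longleftrightarrow> vec.subspace U \<and> vec.subspace H \<and> H \<subseteq> U \<and> vec.dim H + 1 = vec.dim U
     \<and> (\<forall>i\<in>I. vec.subspace (S i) \<and> S i \<subseteq> U \<and> \<not> S i \<subseteq> H)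
     \<and> (\<forall>v\<in>U. v \<notin> H \<longrightarrow> (\<exists>!i. i \<in> I \<and> v \<in> S i))"

definition quadric_avsp :: "('a::{field,finite} ^ 'n \<Rightarrow> 'a) \<Rightarrow> nat \<Rightarrow> nat \<Rightarrow> ('a ^ 'n) set
     \<Rightarrow> ('a ^ 'n) set \<Rightarrow> ('a ^ 'n) set \<Rightarrow> nat \<Rightarrow> (nat \<Rightarrow> ('a ^ 'n) set) \<Rightarrow> bool" where
  "quadric_avsp Q e r U H Pi0 N S \<longleftrightarrow>
     N = CARD('a) ^ ((r + e + 1) div 2)
   \<and> avsp U H S {1..N}
   \<and> vec.dim U = r + 2
   \<and> quadric_type Q H r e
   \<and> generator Q H Pi0
   \<and> (\<forall>i\<in>{1..N}. vec.dim (S i) = (r + 3 - e) div 2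
        \<and> generator Q H (S i \<inter> H) \<and> S i \<inter> H \<inter> Pi0 = {0})
   \<and> (\<forall>i\<in>{1..N}. \<forall>j\<in>{1..N}. i \<noteq> j \<longrightarrow>
        vec.dim (S i \<inter> S j) \<le> 1 \<and> vec.dim (S i \<inter> H \<inter> (S j \<inter> H)) \<le> 1)
   \<and> (\<forall>i\<in>{1..N}. \<forall>j\<in>{1..N}. i \<noteq> j \<longrightarrow> vec.dim (S i \<inter> H \<inter> (S j \<inter> H)) = 1 \<longrightarrow>
        quadric_type Q (vec.span (S i \<union> S j) \<inter> H) (r - e) 0)"

end

theory Submission imports Defs "HOL-Library.FuncSet" begin

locale qf =
  fixes Q :: "'a::field ^ 'n \<Rightarrow> 'a"
  assumes qf: "quadratic_form Q"
begin

lemma polar_ex: "\<exists>A :: 'a ^ 'n ^ 'n. (\<forall>v. Q v = (\<Sum>i\<in>UNIV. \<Sum>j\<in>UNIV. A $ i $ j * v $ i * v $ j)) \<and>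
  (\<forall>u v. polar Q u v = (\<Sum>i\<in>UNIV. \<Sum>j\<in>UNIV. A $ i $ j * (u $ i * v $ j + v $ i * u $ j)))"
proof -
  obtain A :: "'a ^ 'n ^ 'n" where A: "\<And>v. Q v = (\<Sum>i\<in>UNIV. \<Sum>j\<in>UNIV. A $ i $ j * v $ i * v $ j)"
    using qf unfolding quadratic_form_def by blast
  have "polar Q u v = (\<Sum>i\<in>UNIV. \<Sum>j\<in>UNIV. A $ i $ j * (u $ i * v $ j + v $ i * u $ j))" for u v
    unfolding polar_def A sum_subtractf[symmetric] by (rule sum.cong[OF refl], rule sum.cong[OF refl]) (simp add: algebra_simps)
  with A show ?thesis by blast
qed

lemma polar_sym: "polar Q u v = polar Q v u"
  unfolding polar_def add.commute[of u v] by (simp add: algebra_simps)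

lemma polar_add_right: "polar Q u (v + w) = polar Q u v + polar Q u w"
proof -
  obtain A :: "'a ^ 'n ^ 'n" where A: "\<And>u v. polar Q u v = (\<Sum>i\<in>UNIV. \<Sum>j\<in>UNIV. A $ i $ j * (u $ i * v $ j + v $ i * u $ j))"
    using polar_ex by blast
  have "polar Q u (v + w) = (\<Sum>i\<in>UNIV. \<Sum>j\<in>UNIV. A $ i $ j * (u $ i * (v + w) $ j + (v + w) $ i * u $ j))" by (rule A)
  also have "\<dots> = (\<Sum>i\<in>UNIV. \<Sum>j\<in>UNIV. A $ i $ j * (u $ i * v $ j + v $ i * u $ j) + A $ i $ j * (u $ i * w $ j + w $ i * u $ j))"
    by (rule sum.cong[OF refl], rule sum.cong[OF refl]) (simp add: algebra_simps)
  also have "\<dots> = polar Q u v + polar Q u w" by (simp add: A sum.distrib)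
  finally show ?thesis .
qed

lemma polar_scale_right: "polar Q u (c *s v) = c * polar Q u v"
proof -
  obtain A :: "'a ^ 'n ^ 'n" where A: "\<And>u v. polar Q u v = (\<Sum>i\<in>UNIV. \<Sum>j\<in>UNIV. A $ i $ j * (u $ i * v $ j + v $ i * u $ j))"
    using polar_ex by blast
  have "polar Q u (c *s v) = (\<Sum>i\<in>UNIV. \<Sum>j\<in>UNIV. A $ i $ j * (u $ i * (c *s v) $ j + (c *s v) $ i * u $ j))" by (rule A)
  also have "\<dots> = (\<Sum>i\<in>UNIV. \<Sum>j\<in>UNIV. c * (A $ i $ j * (u $ i * v $ j + v $ i * u $ j)))"
    by (rule sum.cong[OF refl], rule sum.cong[OF refl]) (simp add: algebra_simps)
  also have "\<dots> = c * polar Q u v" by (simp add: A sum_distrib_left)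
  finally show ?thesis .
qed

lemma polar_add_left: "polar Q (v + w) u = polar Q v u + polar Q w u"
  using polar_add_right polar_sym by metis

lemma polar_scale_left: "polar Q (c *s v) u = c * polar Q v u"
  using polar_scale_right polar_sym by metis

lemma polar_zero_right[simp]: "polar Q u 0 = 0"
  using polar_scale_right[of u 0 0] by simp

lemma polar_zero_left[simp]: "polar Q 0 u = 0"
  using polar_sym[of 0 u] by simp

lemma polar_neg_right: "polar Q u (- v) = - polar Q u v"
  using polar_scale_right[of u "-1" v] by simp

lemma polar_diff_right: "polar Q u (v - w) = polar Q u v - polar Q u w"
  using polar_add_right[of u v "-w"] polar_neg_right by simp

lemma polar_diff_left: "polar Q (v - w) u = polar Q v u - polar Q w u"
  using polar_diff_right polar_sym by metis

lemma Q_scale: "Q (c *s v) = c^2 * Q v"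
proof -
  obtain A :: "'a ^ 'n ^ 'n" where A: "\<And>v. Q v = (\<Sum>i\<in>UNIV. \<Sum>j\<in>UNIV. A $ i $ j * v $ i * v $ j)"
    using polar_ex by blast
  have "Q (c *s v) = (\<Sum>i\<in>UNIV. \<Sum>j\<in>UNIV. A $ i $ j * (c *s v) $ i * (c *s v) $ j)" by (rule A)
  also have "\<dots> = (\<Sum>i\<in>UNIV. \<Sum>j\<in>UNIV. c^2 * (A $ i $ j * v $ i * v $ j))"
    by (rule sum.cong[OF refl], rule sum.cong[OF refl]) (simp add: algebra_simps power2_eq_square)
  also have "\<dots> = c^2 * Q v" by (simp add: A sum_distrib_left)
  finally show ?thesis .
qed

lemma Q_zero[simp]: "Q 0 = 0"
  using Q_scale[of 0 0] by simp

lemma Q_add: "Q (u + v) = Q u + Q v + polar Q u v"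
  unfolding polar_def by simp

lemma Q_diff: "Q (u - v) = Q u + Q v - polar Q u v"
proof -
  have "Q (u + (-1) *s v) = Q u + Q ((-1) *s v) + polar Q u ((-1) *s v)" by (rule Q_add)
  then show ?thesis using Q_scale[of "-1" v] polar_scale_right[of u "-1" v]
    by (simp add: vector_sneg_minus1[symmetric] )
qed

lemma polar_self: "polar Q v v = 2 * Q v"
proof -
  have "v + v = (1 + 1) *s v" unfolding vec_eq_iff by (simp add: distrib_right)
  then have "Q (v + v) = (1+1)^2 * Q v" using Q_scale by simp
  then show ?thesis unfolding polar_def by (simp add: algebra_simps power2_eq_square)
qed

lemma ts_polar:
  assumes "vec.subspace G" "totally_singular Q G" "x \<in> G" "y \<in> G"
  shows "polar Q x y = 0"
proof -
  have "x + y \<in> G" using assms vec.subspace_add by blast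
  then show ?thesis using assms unfolding polar_def totally_singular_def by simp
qed

lemma span_insert_sub:
  assumes "vec.subspace G"
  shows "x \<in> vec.span (insert v G) \<longleftrightarrow> (\<exists>c y. y \<in> G \<and> x = c *s v + y)"
proof -
  have spG: "vec.span G = G" using assms vec.span_eq_iff by blast
  have "vec.span (insert v G) = vec.span ({v} \<union> G)" by simp
  then show ?thesis unfolding vec.span_Un spG vec.span_singleton by auto
qed

lemma ts_ext:
  assumes sG: "vec.subspace G" and tG: "totally_singular Q G" and Qv: "Q v = 0"
    and pv: "\<forall>x\<in>G. polar Q v x = 0"
  shows "vec.subspace (vec.span (insert v G))" "totally_singular Q (vec.span (insert v G))"
    "v \<notin> G \<Longrightarrow> vec.dim (vec.span (insert v G)) = vec.dim G + 1"
proof -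
  show "vec.subspace (vec.span (insert v G))" by (rule vec.subspace_span)
  show "totally_singular Q (vec.span (insert v G))"
    unfolding totally_singular_def
  proof
    fix x assume "x \<in> vec.span (insert v G)"
    then obtain c y where y: "y \<in> G" "x = c *s v + y" using span_insert_sub[OF sG] by blast
    have "Q x = Q (c *s v) + Q y + polar Q (c *s v) y" using y Q_add by simp
    also have "\<dots> = 0" using Qv tG y pv unfolding totally_singular_def
      by (simp add: Q_scale polar_scale_left)
    finally show "Q x = 0" .
  qed
  assume "v \<notin> G"
  moreover have spG: "vec.span G = G" using sG vec.span_eq_iff by blast
  ultimately show "vec.dim (vec.span (insert v G)) = vec.dim G + 1"
    unfolding vec.dim_span vec.dim_insert spG by simp
qed


lemma ndg:
  assumes sV: "vec.subspace V" and nd: "nondeg_on Q V" and pV: "p \<in> V" and Qp: "Q p = 0"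
    and w0V: "w0 \<in> V" and pw0: "polar Q p w0 \<noteq> 0" and sU: "vec.subspace U" and pU: "p \<notin> U"
    and dec: "\<And>x. \<exists>c u. u \<in> U \<and> x = u + c *s p"
  shows "nondeg_on Q (V \<inter> U \<inter> {v. polar Q p v = 0})"
  unfolding nondeg_on_def
proof (intro ballI impI)
  let ?W = "V \<inter> U \<inter> {v. polar Q p v = 0}"
  fix v assume vW: "v \<in> ?W" and vq: "v \<noteq> 0 \<and> Q v = 0"
  show "\<exists>w\<in>?W. polar Q v w \<noteq> 0"
  proof (rule ccontr)
    assume "\<not> (\<exists>w\<in>?W. polar Q v w \<noteq> 0)"
    then have hall: "\<And>w. w \<in> ?W \<Longrightarrow> polar Q v w = 0" by blast
    have pvp: "polar Q v p = 0" using vW polar_sym by simp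
    have ppp: "polar Q p p = 0" using polar_self Qp by simp
    define c where "c = polar Q v w0 / polar Q p w0"
    have orth: "polar Q (v - c *s p) x = 0" if xV: "x \<in> V" for x
    proof -
      define a where "a = polar Q p x / polar Q p w0"
      define y where "y = x - a *s w0"
      have yV: "y \<in> V" unfolding y_def using xV w0V sV vec.subspace_diff vec.subspace_scale by blast
      have py: "polar Q p y = 0" unfolding y_def a_def using pw0
        by (simp add: polar_diff_right polar_scale_right)
      obtain d u where du: "u \<in> U" "y = u + d *s p" using dec by blast
      have "u = y - d *s p" using du by simp
      then have uV: "u \<in> V" using yV pV sV vec.subspace_diff vec.subspace_scale by blast
      have "polar Q p u = 0" using \<open>u = y - d *s p\<close> py ppp
        by (simp add: polar_diff_right polar_scale_right)
      then have "u \<in> ?W" using uV du by simp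
      then have vu: "polar Q v u = 0" by (rule hall)
      have vy: "polar Q v y = 0" using du vu pvp by (simp add: polar_add_right polar_scale_right)
      have "x = y + a *s w0" unfolding y_def by simp
      then have "polar Q v x = a * polar Q v w0" using vy by (simp add: polar_add_right polar_scale_right)
      then have "polar Q v x = c * polar Q p x" unfolding a_def c_def using pw0 by (simp add: field_simps)
      then show ?thesis by (simp add: polar_diff_left polar_scale_left)
    qed
    have "Q (v - c *s p) = 0" using vq Qp pvp by (simp add: Q_diff Q_scale polar_scale_right)
    moreover have "v - c *s p \<in> V" using vW pV sV vec.subspace_diff vec.subspace_scale by blast
    ultimately have "v - c *s p = 0" using nd orth unfolding nondeg_on_def by blast
    then have vc: "v = c *s p" by simp
    then have "c \<noteq> 0" using vq by auto
    then have "p = inverse c *s v" using vc by simp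
    moreover have "inverse c *s v \<in> U" using vW sU vec.subspace_scale by blast
    ultimately show False using pU by simp
  qed
qed

end

lemma dim_split:
  fixes W K :: "('a::field^'n) set"
  assumes sW: "vec.subspace W" and sK: "vec.subspace K" and w0W: "w0 \<in> W" and w0K: "w0 \<notin> K"
    and dec: "\<And>x. x \<in> W \<Longrightarrow> \<exists>c. x - c *s w0 \<in> K"
  shows "vec.dim (W \<inter> K) + 1 = vec.dim W"
proof -
  let ?S = "W \<inter> K" let ?T = "vec.span {w0}"
  have sS: "vec.subspace ?S" using vec.subspace_inter sW sK by blast
  have sT: "vec.subspace ?T" by (rule vec.subspace_span)
  have w0nz: "w0 \<noteq> 0" using sK w0K vec.subspace_0 by blast
  have TW: "?T \<subseteq> W" using vec.span_minimal[of "{w0}" W] sW w0W by blast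
  have sum: "{x + y |x y. x \<in> ?S \<and> y \<in> ?T} = W"
  proof
    show "{x + y |x y. x \<in> ?S \<and> y \<in> ?T} \<subseteq> W"
      using TW sW vec.subspace_add by blast
    show "W \<subseteq> {x + y |x y. x \<in> ?S \<and> y \<in> ?T}"
    proof
      fix x assume xW: "x \<in> W"
      obtain c where c: "x - c *s w0 \<in> K" using dec[OF xW] by blast
      have "x - c *s w0 \<in> W" using xW w0W sW vec.subspace_diff vec.subspace_scale by blast
      moreover have "c *s w0 \<in> ?T" by (simp add: vec.span_base vec.span_scale)
      moreover have "x = (x - c *s w0) + c *s w0" by simp
      ultimately show "x \<in> {x + y |x y. x \<in> ?S \<and> y \<in> ?T}" using c by blast
    qed
  qed
  have int: "?S \<inter> ?T = {0}"
  proof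
    show "?S \<inter> ?T \<subseteq> {0}"
    proof
      fix y assume y: "y \<in> ?S \<inter> ?T"
      then obtain c where yc: "y = c *s w0" using vec.span_singleton by blast
      show "y \<in> {0}"
      proof (cases "c = 0")
        case True then show ?thesis using yc by simp
      next
        case False
        have "inverse c *s y \<in> K" using y sK vec.subspace_scale by blast
        then have "w0 \<in> K" using yc False by simp
        then show ?thesis using w0K by blast
      qed
    qed
    show "{0} \<subseteq> ?S \<inter> ?T" using sS sT vec.subspace_0 by blast
  qed
  have d1: "vec.dim ?T = 1" using w0nz by simp
  have d0: "vec.dim (?S \<inter> ?T) = 0" unfolding int by simp
  from vec.dim_sums_Int[OF sS sT] show ?thesis unfolding sum d1 d0 by simp
qed

lemma card_subspace:
  fixes W :: "('a::{field,finite}^'n) set"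
  assumes sW: "vec.subspace W"
  shows "card W = CARD('a) ^ vec.dim W"
proof -
  obtain B where B: "B \<subseteq> W" "vec.independent B" "W \<subseteq> vec.span B" "card B = vec.dim W"
    using vec.basis_exists by blast
  have fB: "finite B" by simp
  have WB: "vec.span B = W" using vec.span_minimal[OF B(1) sW] B(3) by blast
  let ?f = "\<lambda>u. \<Sum>v\<in>B. u v *s v"
  have inj: "inj_on ?f (B \<rightarrow>\<^sub>E (UNIV::'a set))"
  proof (rule inj_onI)
    fix u u' assume u: "u \<in> B \<rightarrow>\<^sub>E (UNIV::'a set)" and u': "u' \<in> B \<rightarrow>\<^sub>E (UNIV::'a set)"
      and eq: "?f u = ?f u'"
    have "(\<Sum>v\<in>B. (\<lambda>v. u v - u' v) v *s v) = ?f u - ?f u'"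
      by (simp add: vec.scale_left_diff_distrib sum_subtractf)
    also have "\<dots> = 0" using eq by simp
    finally have z: "(\<Sum>v\<in>B. (\<lambda>v. u v - u' v) v *s v) = 0" .
    from B(2) have ind: "\<forall>c. (\<Sum>v\<in>B. c v *s v) = 0 \<longrightarrow> (\<forall>v\<in>B. c v = 0)"
      unfolding vec.independent_explicit by (rule conjunct2)
    have "\<forall>v\<in>B. u v - u' v = 0" using ind[rule_format, OF z] by simp
    show "u = u'"
    proof (rule PiE_ext[OF u u'])
      fix v assume "v \<in> B"
      then show "u v = u' v" using \<open>\<forall>v\<in>B. u v - u' v = 0\<close> by simp
    qed
  qed
  have img: "?f ` (B \<rightarrow>\<^sub>E (UNIV::'a set)) = vec.span B"
  proof
    show "?f ` (B \<rightarrow>\<^sub>E UNIV) \<subseteq> vec.span B"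
    proof
      fix x assume "x \<in> ?f ` (B \<rightarrow>\<^sub>E UNIV)"
      then obtain u where "x = ?f u" by blast
      moreover have "?f u \<in> vec.span B"
        by (rule vec.span_sum, rule vec.span_scale, rule vec.span_base)
      ultimately show "x \<in> vec.span B" by simp
    qed
    show "vec.span B \<subseteq> ?f ` (B \<rightarrow>\<^sub>E UNIV)"
    proof
      fix x assume "x \<in> vec.span B"
      then obtain u where x: "x = ?f u" using vec.span_finite[OF fB] by blast
      have mem: "restrict u B \<in> B \<rightarrow>\<^sub>E UNIV" by simp
      have "?f (restrict u B) = ?f u" by (rule sum.cong) auto
      then have xe: "x = ?f (restrict u B)" using x by simp
      show "x \<in> ?f ` (B \<rightarrow>\<^sub>E UNIV)" using image_eqI[where f = ?f, OF xe mem] .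
    qed
  qed
  have "card (vec.span B) = card (B \<rightarrow>\<^sub>E (UNIV::'a set))"
    using card_image[OF inj] img by simp
  also have "\<dots> = CARD('a) ^ card B" by (simp add: card_funcsetE)
  finally show ?thesis using WB B(4) by simp
qed

lemma dim_univ: "vec.dim (UNIV :: ('a::field^'n) set) = CARD('n)"
  by (simp add: card_cart_basis)

lemma dim_full: fixes S :: "('a::field^'n) set" assumes "vec.dim S = CARD('n)" shows "vec.span S = UNIV"
  using vec.dim_eq_full[of S] assms by (simp add: vec.dimension_def card_cart_basis)

lemma subspace_full: fixes S :: "('a::field^'n) set" assumes "vec.subspace S" "vec.dim S = CARD('n)" shows "S = UNIV"
  using dim_full[OF assms(2)] assms(1) vec.span_eq_iff by blast

lemma hyp_dec:
  fixes U :: "('a::field^'n) set"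
  assumes sU: "vec.subspace U" and dU: "vec.dim U + 1 = CARD('n)" and pU: "p \<notin> U"
  shows "\<exists>c u. u \<in> U \<and> x = u + c *s p"
proof -
  have spU: "vec.span U = U" using sU vec.span_eq_iff by blast
  have "vec.dim (insert p U) = CARD('n)" unfolding vec.dim_insert spU using dU pU by simp
  then have "x \<in> vec.span ({p} \<union> U)" using dim_full by auto
  then obtain a b where ab: "x = a + b" "a \<in> vec.span {p}" "b \<in> vec.span U" unfolding vec.span_Un by blast
  then obtain c where "a = c *s p" using vec.span_singleton by blast
  then have "b \<in> U \<and> x = b + c *s p" using ab spU by (simp add: add.commute)
  then show ?thesis by blast
qed

lemma witt_le:
  fixes Q :: "'a::field ^ 'n \<Rightarrow> 'a"
  assumes "vec.subspace G" "G \<subseteq> W" "totally_singular Q G"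
  shows "vec.dim G \<le> witt_index Q W"
proof -
  have dimle: "\<And>G::('a^'n) set. vec.dim G \<le> vec.dim (UNIV::('a^'n) set)" by (rule vec.dim_subset) simp
  have "finite {vec.dim G | G. vec.subspace G \<and> G \<subseteq> W \<and> totally_singular Q G}"
    by (rule finite_subset[of _ "{..vec.dim (UNIV :: ('a^'n) set)}"]) (use dimle in auto)
  then show ?thesis unfolding witt_index_def using assms by (auto intro!: Max_ge)
qed

lemma witt_eq:
  fixes Q :: "'a::field ^ 'n \<Rightarrow> 'a"
  assumes "\<And>G. vec.subspace G \<Longrightarrow> G \<subseteq> W \<Longrightarrow> totally_singular Q G \<Longrightarrow> vec.dim G \<le> m"
    and "vec.subspace G0" "G0 \<subseteq> W" "totally_singular Q G0" "vec.dim G0 = m"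
  shows "witt_index Q W = m"
proof -
  have dimle: "\<And>G::('a^'n) set. vec.dim G \<le> vec.dim (UNIV::('a^'n) set)" by (rule vec.dim_subset) simp
  have "finite {vec.dim G | G. vec.subspace G \<and> G \<subseteq> W \<and> totally_singular Q G}"
    by (rule finite_subset[of _ "{..vec.dim (UNIV :: ('a^'n) set)}"]) (use dimle in auto)
  then show ?thesis unfolding witt_index_def using assms
    by (intro Max_eqI) auto
qed


theorem mainTheorem2:
  fixes Q :: "'a::{field,finite} ^ 'n \<Rightarrow> 'a"
    and e r N :: nat
    and Sigma :: "nat \<Rightarrow> ('a ^ 'n) set"
    and P U :: "('a ^ 'n) set"
  assumes "e \<le> 2" and "odd (r + e)"
    and "CARD('n) = r + 3"
    and "quadratic_form Q"
    and "quadric_type Q UNIV (r + 2) e"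
    and "N = CARD('a) ^ ((r + e + 1) div 2)"
    and "\<forall>i\<in>{1..N+1}. generator Q UNIV (Sigma i)"
    and "\<forall>i\<in>{1..N+1}. \<forall>j\<in>{1..N+1}. i \<noteq> j \<longrightarrow> Sigma i \<inter> Sigma j = {0}"
    and "vec.subspace P" and "vec.dim P = 1" and "P \<subseteq> Sigma (N + 1)"
    and "vec.subspace U" and "vec.dim U = r + 2" and "\<not> P \<subseteq> U"
  shows "quadric_avsp Q e r U (U \<inter> perp Q P) (Sigma (N + 1) \<inter> (U \<inter> perp Q P)) N
           (\<lambda>i. vec.span (P \<union> Sigma i) \<inter> U)"
proof -
  note A = assms
  interpret qf Q by (rule qf.intro) (rule assms(4))
  define q where "q = CARD('a)"
  define g where "g = (r + 3 - e) div 2"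
  have e2: "e \<le> 2" and oddre: "odd (r + e)" using A by auto
  have g2: "2 * g = r + 3 - e" using e2 oddre unfolding g_def by presburger
  have g1: "g \<ge> 1" using g2 e2 by linarith
  have gH: "(r + 1 - e) div 2 = g - 1" using g2 e2 by presburger
  have tg: "(r + e + 1) div 2 + (g - 1) = r + 1" using g2 e2 oddre by presburger
  have gU: "(r + 2 + 1 - e) div 2 = g" unfolding g_def by (simp add: add.assoc)
  have ndU: "nondeg_on Q UNIV" and wU: "witt_index Q UNIV = g"
    using A(5) gU unfolding quadric_type_def by auto
  have dimUNIV: "vec.dim (UNIV::('a^'n) set) = r + 3" unfolding dim_univ by (rule A(3))
  have Sig: "vec.subspace (Sigma i) \<and> totally_singular Q (Sigma i) \<and> vec.dim (Sigma i) = g"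
    if "i \<in> {1..N+1}" for i
    using A(7) wU that unfolding generator_def by auto
  have SigN: "vec.subspace (Sigma (N+1))" "totally_singular Q (Sigma (N+1))" "vec.dim (Sigma (N+1)) = g"
    using Sig[of "N+1"] by auto
  have bound: "vec.dim G \<le> g" if "vec.subspace G" "totally_singular Q G" for G
    using witt_le[of G UNIV Q] wU that by simp
  obtain B where B: "B \<subseteq> P" "vec.independent B" "P \<subseteq> vec.span B" "card B = vec.dim P"
    using vec.basis_exists by blast
  then obtain p where Bp: "B = {p}" using A(10) card_1_singletonE by metis
  have p0: "p \<noteq> 0" using B(2) Bp vec.dependent_zero by blast
  have pP: "P = vec.span {p}" using B Bp vec.span_minimal[of "{p}" P] A(9) by blast
  have Pc: "x \<in> P \<longleftrightarrow> (\<exists>c. x = c *s p)" for x using pP vec.span_singleton by auto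
  have pinP: "p \<in> P" using pP vec.span_base by blast
  have pS: "p \<in> Sigma (N+1)" using A(11) pP vec.span_base by blast
  have Qp: "Q p = 0" using Sig[of "N+1"] pS unfolding totally_singular_def by auto
  have pU: "p \<notin> U"
  proof
    assume "p \<in> U"
    then have "P \<subseteq> U" using pP vec.span_minimal[of "{p}" U] A(12) by blast
    then show False using A(14) by blast
  qed
  have dec: "\<exists>c u. u \<in> U \<and> x = u + c *s p" for x using hyp_dec[OF A(12) _ pU] A(13) A(3) by simp
  define K where "K = {v. polar Q p v = 0}"
  have perpK: "perp Q P = K" unfolding perp_def K_def using Pc pinP by (auto simp: polar_scale_left)
  have sK: "vec.subspace K" unfolding K_def vec.subspace_def by (simp add: polar_add_right polar_scale_right)
  have ppp: "polar Q p p = 0" using polar_self Qp by simp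
  have pK: "p \<in> K" unfolding K_def using ppp by simp
  obtain w0 where pw0: "polar Q p w0 \<noteq> 0" using ndU p0 Qp unfolding nondeg_on_def by blast
  have splitK: "vec.dim (W \<inter> K) + 1 = vec.dim W"
    if sW: "vec.subspace W" and wW: "w \<in> W" and pw: "polar Q p w \<noteq> 0" for W w
  proof (rule dim_split[OF sW sK wW])
    show "w \<notin> K" using pw unfolding K_def by simp
    fix x show "\<exists>c. x - c *s w \<in> K"
      by (rule exI[of _ "polar Q p x / polar Q p w"]) (use pw in \<open>simp add: K_def polar_diff_right polar_scale_right\<close>)
  qed
  have splitU: "vec.dim (W \<inter> U) + 1 = vec.dim W"
    if sW: "vec.subspace W" and pW: "p \<in> W" for W
  proof (rule dim_split[OF sW A(12) pW pU])
    fix x obtain c u where "u \<in> U" "x = u + c *s p" using dec by blast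
    then have "x - c *s p \<in> U" by simp
    then show "\<exists>c. x - c *s p \<in> U" by blast
  qed
  define H where "H = U \<inter> K"
  have sH: "vec.subspace H" unfolding H_def using A(12) sK vec.subspace_inter by blast
  have dimK: "vec.dim K + 1 = r + 3" using splitK[OF vec.subspace_UNIV, of w0] pw0 dimUNIV by simp
  have dimH: "vec.dim H = r + 1" using splitU[OF sK pK] dimK unfolding H_def by (simp add: Int_commute)
  have HU: "H \<subseteq> U" unfolding H_def by blast
  have Hbound: "vec.dim G + 1 \<le> g" if sG: "vec.subspace G" and GH: "G \<subseteq> H" and tG: "totally_singular Q G" for G
  proof -
    have "\<forall>x\<in>G. polar Q p x = 0" using GH unfolding H_def K_def by blast
    note te = ts_ext[OF sG tG Qp this]
    have "p \<notin> G" using GH HU pU by blast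
    then have "vec.dim (vec.span (insert p G)) = vec.dim G + 1" using te(3) by blast
    then show ?thesis using bound[OF te(1) te(2)] by simp
  qed
  have SNK: "Sigma (N+1) \<subseteq> K" unfolding K_def using ts_polar Sig[of "N+1"] pS by auto
  define Pi0 where "Pi0 = Sigma (N+1) \<inter> H"
  have Pi0eq: "Pi0 = Sigma (N+1) \<inter> U" using SNK unfolding Pi0_def H_def by auto
  have dimPi0: "vec.dim Pi0 = g - 1" using splitU[of "Sigma (N+1)"] Sig[of "N+1"] pS unfolding Pi0eq by simp
  have sPi0: "vec.subspace Pi0" unfolding Pi0_def using SigN sH vec.subspace_inter by blast
  have tsPi0: "totally_singular Q Pi0" using Sig[of "N+1"] unfolding Pi0_def totally_singular_def by simp
  have Pi0H: "Pi0 \<subseteq> H" unfolding Pi0_def by blast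
  have wittH: "witt_index Q H = g - 1"
  proof (rule witt_eq[OF _ sPi0 Pi0H tsPi0 dimPi0])
    fix G assume "vec.subspace G" "G \<subseteq> H" "totally_singular Q G"
    then show "vec.dim G \<le> g - 1" using Hbound by fastforce
  qed
  have ndH: "nondeg_on Q H"
    using ndg[OF vec.subspace_UNIV ndU _ Qp _ pw0 A(12) pU dec] unfolding H_def K_def by (simp add: Int_assoc)
  define T where "T i = vec.span (P \<union> Sigma i)" for i
  define S where "S i = T i \<inter> U" for i
  have iN: "i \<in> {1..N+1}" "i \<noteq> N+1" if "i \<in> {1..N}" for i using that by auto
  have SigI: "vec.subspace (Sigma i)" "totally_singular Q (Sigma i)" "vec.dim (Sigma i) = g"
    if "i \<in> {1..N}" for i using Sig iN[OF that] by auto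
  have disj: "Sigma i \<inter> Sigma j = {0}" if "i \<in> {1..N+1}" "j \<in> {1..N+1}" "i \<noteq> j" for i j
    using A(8) that by blast
  have spP: "vec.span P = P" using A(9) vec.span_eq_iff by blast
  have Tmem: "x \<in> T i \<longleftrightarrow> (\<exists>c s. s \<in> Sigma i \<and> x = c *s p + s)" if "i \<in> {1..N}" for i x
  proof -
    have spSi: "vec.span (Sigma i) = Sigma i" using SigI[OF that] vec.span_eq_iff by blast
    show ?thesis unfolding T_def vec.span_Un spP spSi using Pc by auto
  qed
  have Tins: "T i = vec.span (insert p (Sigma i))" if "i \<in> {1..N}" for i
    using Tmem[OF that] span_insert_sub[OF SigI(1)[OF that]] by blast
  have pSi: "p \<notin> Sigma i" if "i \<in> {1..N}" for i
  proof
    assume "p \<in> Sigma i"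
    then have "p \<in> Sigma i \<inter> Sigma (N+1)" using pS by blast
    then show False using disj[of i "N+1"] iN[OF that] p0 by auto
  qed
  have SiK: "\<exists>w\<in>Sigma i. polar Q p w \<noteq> 0" if i: "i \<in> {1..N}" for i
  proof (rule ccontr)
    assume "\<not> (\<exists>w\<in>Sigma i. polar Q p w \<noteq> 0)"
    then have "\<forall>x\<in>Sigma i. polar Q p x = 0" by blast
    note te = ts_ext[OF SigI(1)[OF i] SigI(2)[OF i] Qp this]
    have "vec.dim (vec.span (insert p (Sigma i))) = g + 1" using te(3) pSi[OF i] SigI(3)[OF i] by simp
    then show False using bound[OF te(1) te(2)] by simp
  qed
  have sT: "vec.subspace (T i)" for i unfolding T_def by (rule vec.subspace_span)
  have pT: "p \<in> T i" for i unfolding T_def using pinP vec.span_base by blast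
  have SigT: "Sigma i \<subseteq> T i" for i unfolding T_def using vec.span_base by blast
  have dimT: "vec.dim (T i) = g + 1" if i: "i \<in> {1..N}" for i
  proof -
    have spSi: "vec.span (Sigma i) = Sigma i" using SigI[OF i] vec.span_eq_iff by blast
    show ?thesis unfolding Tins[OF i] vec.dim_span vec.dim_insert spSi using pSi[OF i] SigI(3)[OF i] by simp
  qed
  have sS: "vec.subspace (S i)" for i unfolding S_def using sT A(12) vec.subspace_inter by blast
  have dimS: "vec.dim (S i) = g" if i: "i \<in> {1..N}" for i
    using splitU[OF sT pT, of i] dimT[OF i] unfolding S_def by simp
  have dimTK: "vec.dim (T i \<inter> K) = g" if i: "i \<in> {1..N}" for i
  proof -
    obtain w where "w \<in> Sigma i" "polar Q p w \<noteq> 0" using SiK[OF i] by blast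
    then show ?thesis using splitK[OF sT, of w i] SigT[of i] dimT[OF i] by auto
  qed
  have SH: "S i \<inter> H = (T i \<inter> K) \<inter> U" for i unfolding S_def H_def by blast
  have sTK: "vec.subspace (T i \<inter> K)" for i using sT sK vec.subspace_inter by blast
  have dimSH: "vec.dim (S i \<inter> H) = g - 1" if i: "i \<in> {1..N}" for i
    using splitU[OF sTK, of i] pT pK dimTK[OF i] unfolding SH by simp
  have sSH: "vec.subspace (S i \<inter> H)" for i using sS sH vec.subspace_inter by blast
  have tsSH: "totally_singular Q (S i \<inter> H)" if i: "i \<in> {1..N}" for i
    unfolding totally_singular_def
  proof
    fix x assume "x \<in> S i \<inter> H"
    then have xT: "x \<in> T i" and xK: "polar Q p x = 0" unfolding S_def H_def K_def by auto
    obtain c s where cs: "s \<in> Sigma i" "x = c *s p + s" using xT Tmem[OF i] by blast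
    have ps: "polar Q p s = 0" using xK cs ppp by (simp add: polar_add_right polar_scale_right)
    have "Q s = 0" using cs SigI(2)[OF i] unfolding totally_singular_def by blast
    then show "Q x = 0" using cs Qp ps by (simp add: Q_add Q_scale polar_scale_left)
  qed
  have SHPi0: "S i \<inter> H \<inter> Pi0 = {0}" if i: "i \<in> {1..N}" for i
  proof
    show "S i \<inter> H \<inter> Pi0 \<subseteq> {0}"
    proof
      fix x assume x: "x \<in> S i \<inter> H \<inter> Pi0"
      then have xT: "x \<in> T i" and xU: "x \<in> U" and xN: "x \<in> Sigma (N+1)" unfolding S_def Pi0_def by auto
      obtain c s where cs: "s \<in> Sigma i" "x = c *s p + s" using xT Tmem[OF i] by blast
      have "s = x - c *s p" using cs by simp
      then have "s \<in> Sigma (N+1)" using xN pS SigN(1) vec.subspace_diff vec.subspace_scale by blast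
      then have "s = 0" using cs disj[of i "N+1"] iN[OF i] by auto
      then have xc: "x = c *s p" using cs by simp
      have "c = 0"
      proof (rule ccontr)
        assume "c \<noteq> 0"
        then have "p = inverse c *s x" using xc by simp
        then show False using xU A(12) vec.subspace_scale pU by metis
      qed
      then show "x \<in> {0}" using xc by simp
    qed
    show "{0} \<subseteq> S i \<inter> H \<inter> Pi0" using sSH sPi0 vec.subspace_0 by blast
  qed
  have SnotH: "\<not> S i \<subseteq> H" if i: "i \<in> {1..N}" for i
  proof
    assume "S i \<subseteq> H"
    then have "S i \<inter> H = S i" by blast
    then show False using dimS[OF i] dimSH[OF i] g1 by simp
  qed
  have spSig: "vec.span (Sigma i) = Sigma i" if "i \<in> {1..N}" for i
    using SigI[OF that] vec.span_eq_iff by blast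
  have uniq: False if i: "i \<in> {1..N}" and j: "j \<in> {1..N}" and ij: "i \<noteq> j"
    and vi: "v \<in> S i" and vj: "v \<in> S j" and pv: "polar Q p v \<noteq> 0" for i j v
  proof -
    obtain a s where s: "s \<in> Sigma i" "v = a *s p + s" using vi Tmem[OF i] unfolding S_def by blast
    obtain b t where t: "t \<in> Sigma j" "v = b *s p + t" using vj Tmem[OF j] unfolding S_def by blast
    have pvs: "polar Q p v = polar Q p s" using s ppp by (simp add: polar_add_right polar_scale_right)
    have dij: "Sigma i \<inter> Sigma j = {0}" using disj iN i j ij by auto
    show False
    proof (cases "a = b")
      case True
      then have "s = t" using s t by simp
      then have "s = 0" using s t dij by blast
      then show False using pvs pv by simp
    next
      case False
      have st: "s - t = (b - a) *s p" using s t by (simp add: vec.scale_left_diff_distrib algebra_simps)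
      have Qs: "Q s = 0" and Qt: "Q t = 0" using s t SigI(2)[OF i] SigI(2)[OF j] unfolding totally_singular_def by auto
      have "Q (s - t) = 0" unfolding st Q_scale using Qp by simp
      then have pst: "polar Q s t = 0" using Qs Qt by (simp add: Q_diff)
      have "polar Q (s - t) s = 0" using pst Qs polar_sym[of t s] by (simp add: polar_diff_left polar_self)
      then have "(b - a) * polar Q p s = 0" unfolding st polar_scale_left .
      then have "polar Q p s = 0" using False by simp
      then show False using pvs pv by simp
    qed
  qed
  have nonorth: "\<exists>y\<in>Sigma j. polar Q x y \<noteq> 0"
    if i: "i \<in> {1..N}" and j: "j \<in> {1..N}" and ij: "i \<noteq> j" and x: "x \<in> Sigma i" "x \<noteq> 0" for i j x
  proof (rule ccontr)
    assume "\<not> (\<exists>y\<in>Sigma j. polar Q x y \<noteq> 0)"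
    then have h1: "\<forall>y\<in>Sigma j. polar Q x y = 0" by blast
    have "Q x = 0" using x SigI(2)[OF i] unfolding totally_singular_def by auto
    note te = ts_ext[OF SigI(1)[OF j] SigI(2)[OF j] \<open>Q x = 0\<close> \<open>\<forall>y\<in>Sigma j. polar Q x y = 0\<close>]
    have dij: "Sigma i \<inter> Sigma j = {0}" using disj iN i j ij by auto
    have "x \<notin> Sigma j" using x dij by blast
    then have "vec.dim (vec.span (insert x (Sigma j))) = g + 1" using te(3) SigI(3)[OF j] by simp
    then show False using bound[OF te(1) te(2)] by simp
  qed
  have pair: "vec.dim (S i \<inter> S j) \<le> 1 \<and> vec.dim (S i \<inter> H \<inter> (S j \<inter> H)) \<le> 1 \<and>
      (vec.dim (S i \<inter> H \<inter> (S j \<inter> H)) = 1 \<longrightarrow> quadric_type Q (vec.span (S i \<union> S j) \<inter> H) (r - e) 0)"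
    if i: "i \<in> {1..N}" and j: "j \<in> {1..N}" and ij: "i \<noteq> j" for i j
  proof -
    define V where "V = vec.span (Sigma i \<union> Sigma j)"
    have dij: "Sigma i \<inter> Sigma j = {0}" using disj iN i j ij by auto
    have Veq: "V = {x + y |x y. x \<in> Sigma i \<and> y \<in> Sigma j}"
      unfolding V_def vec.span_Un spSig[OF i] spSig[OF j] by blast
    have sV: "vec.subspace V" unfolding V_def by (rule vec.subspace_span)
    have dimV: "vec.dim V = 2 * g"
      using vec.dim_sums_Int[OF SigI(1)[OF i] SigI(1)[OF j]] dij SigI(3)[OF i] SigI(3)[OF j]
      unfolding Veq[symmetric] by simp
    have SSsub: "Sigma i \<union> Sigma j \<subseteq> {x + y |x y. x \<in> T i \<and> y \<in> T j}"
    proof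
      fix x assume x: "x \<in> Sigma i \<union> Sigma j"
      have z: "0 \<in> T i" "0 \<in> T j" using sT vec.subspace_0 by blast+
      show "x \<in> {x + y |x y. x \<in> T i \<and> y \<in> T j}"
      proof (cases "x \<in> Sigma i")
        case True
        then have "x \<in> T i" using SigT by blast
        moreover have "x = x + 0" by simp
        ultimately show ?thesis using z by blast
      next
        case False
        then have "x \<in> T j" using x SigT by blast
        moreover have "x = 0 + x" by simp
        ultimately show ?thesis using z by blast
      qed
    qed
    have "vec.dim (Sigma i \<union> Sigma j) = 2 * g" using dimV unfolding V_def vec.dim_span .
    then have "2 * g \<le> vec.dim {x + y |x y. x \<in> T i \<and> y \<in> T j}" using vec.dim_subset[OF SSsub] by simp
    moreover have "vec.dim {x + y |x y. x \<in> T i \<and> y \<in> T j} + vec.dim (T i \<inter> T j) = (g+1) + (g+1)"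
      using vec.dim_sums_Int[OF sT sT, of i j] dimT[OF i] dimT[OF j] by simp
    ultimately have dTT: "vec.dim (T i \<inter> T j) \<le> 2" by simp
    have sTT: "vec.subspace (T i \<inter> T j)" using sT vec.subspace_inter by blast
    have "vec.dim (T i \<inter> T j \<inter> U) + 1 = vec.dim (T i \<inter> T j)" using splitU[OF sTT] pT by blast
    moreover have SS: "S i \<inter> S j = T i \<inter> T j \<inter> U" unfolding S_def by blast
    ultimately have d1: "vec.dim (S i \<inter> S j) \<le> 1" using dTT by simp
    have "vec.dim (S i \<inter> H \<inter> (S j \<inter> H)) \<le> vec.dim (S i \<inter> S j)" by (rule vec.dim_subset) blast
    then have d2: "vec.dim (S i \<inter> H \<inter> (S j \<inter> H)) \<le> 1" using d1 by linarith
    have c3: "quadric_type Q (vec.span (S i \<union> S j) \<inter> H) (r - e) 0"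
      if d: "vec.dim (S i \<inter> H \<inter> (S j \<inter> H)) = 1"
    proof -
      have "\<not> (S i \<inter> H \<inter> (S j \<inter> H)) \<subseteq> {0}" using d vec.dim_eq_0 by (metis one_neq_zero)
      then obtain w where w: "w \<in> S i \<inter> H \<inter> (S j \<inter> H)" "w \<noteq> 0" by blast
      obtain a s where s: "s \<in> Sigma i" "w = a *s p + s" using w Tmem[OF i] unfolding S_def by blast
      obtain b t where t: "t \<in> Sigma j" "w = b *s p + t" using w Tmem[OF j] unfolding S_def by blast
      have wU: "w \<in> U" using w unfolding S_def by blast
      have ab: "a \<noteq> b"
      proof
        assume "a = b"
        then have "s = t" using s t by simp
        then have "s = 0" using s t dij by blast
        then have wa: "w = a *s p" using s by simp
        then have "a \<noteq> 0" using w by auto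
        then have "p = inverse a *s w" using wa by simp
        moreover have "inverse a *s w \<in> U" using wU A(12) vec.subspace_scale by blast
        ultimately show False using pU by simp
      qed
      have st: "s - t = (b - a) *s p" using s t by (simp add: vec.scale_left_diff_distrib algebra_simps)
      have "s \<in> V" "t \<in> V" unfolding V_def using s t vec.span_base by blast+
      then have "s - t \<in> V" using sV vec.subspace_diff by blast
      then have "inverse (b - a) *s (s - t) \<in> V" using sV vec.subspace_scale by blast
      moreover have "inverse (b - a) *s (s - t) = p"
      proof -
        have nz: "b - a \<noteq> 0" using ab by simp
        show ?thesis unfolding st by (simp only: vec.scale_scale left_inverse[OF nz] vec.scale_one)
      qed
      ultimately have pV: "p \<in> V" by simp
      have Vrad: "\<exists>y\<in>V. polar Q v y \<noteq> 0" if vV: "v \<in> V" and v0: "v \<noteq> 0" for v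
      proof -
        obtain x y where xy: "x \<in> Sigma i" "y \<in> Sigma j" "v = x + y" using vV Veq by blast
        show ?thesis
        proof (cases "x = 0")
          case False
          then obtain y' where y': "y' \<in> Sigma j" "polar Q x y' \<noteq> 0" using nonorth[OF i j ij xy(1)] by blast
          have "polar Q y y' = 0" using ts_polar SigI[OF j] xy(2) y'(1) by blast
          then have "polar Q v y' \<noteq> 0" using xy y' by (simp add: polar_add_left)
          moreover have "y' \<in> V" unfolding V_def using y' vec.span_base by blast
          ultimately show ?thesis by blast
        next
          case True
          then have "y \<noteq> 0" using xy v0 by simp
          then obtain x' where x': "x' \<in> Sigma i" "polar Q y x' \<noteq> 0" using nonorth[OF j i _ xy(2)] ij by metis
          have "polar Q v x' \<noteq> 0" using xy x' True by simp
          moreover have "x' \<in> V" unfolding V_def using x' vec.span_base by blast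
          ultimately show ?thesis by blast
        qed
      qed
      have ndV: "nondeg_on Q V" unfolding nondeg_on_def using Vrad by blast
      obtain w1 where w1: "w1 \<in> V" "polar Q p w1 \<noteq> 0" using Vrad[OF pV p0] by blast
      have PV: "P \<subseteq> V" using pP vec.span_minimal[of "{p}" V] sV pV by blast
      have TV: "T k \<subseteq> V" if "k = i \<or> k = j" for k
      proof -
        have "Sigma k \<subseteq> V" unfolding V_def using that vec.span_superset by blast
        then have "P \<union> Sigma k \<subseteq> V" using PV by blast
        then show ?thesis unfolding T_def using vec.span_minimal sV by blast
      qed
      have sVU: "vec.subspace (V \<inter> U)" using sV A(12) vec.subspace_inter by blast
      have spanSS: "vec.span (S i \<union> S j) = V \<inter> U"
      proof
        show "vec.span (S i \<union> S j) \<subseteq> V \<inter> U"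
          using TV[of i] TV[of j] vec.span_minimal[OF _ sVU, of "S i \<union> S j"] unfolding S_def by blast
        show "V \<inter> U \<subseteq> vec.span (S i \<union> S j)"
        proof
          fix x assume x: "x \<in> V \<inter> U"
          obtain s t where xs: "s \<in> Sigma i" "t \<in> Sigma j" "x = s + t" using x Veq by blast
          obtain c1 u1 where u1: "u1 \<in> U" "s = u1 + c1 *s p" using dec by blast
          obtain c2 u2 where u2: "u2 \<in> U" "t = u2 + c2 *s p" using dec by blast
          have "u1 = (- c1) *s p + s" using u1 by simp
          then have "u1 \<in> T i" using Tmem[OF i] xs by blast
          then have u1S: "u1 \<in> S i" using u1 unfolding S_def by blast
          have "u2 = (- c2) *s p + t" using u2 by simp
          then have "u2 \<in> T j" using Tmem[OF j] xs by blast
          then have u2S: "u2 \<in> S j" using u2 unfolding S_def by blast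
          have xe: "x - (u1 + u2) = (c1 + c2) *s p" using xs u1 u2 by (simp add: vec.scale_left_distrib algebra_simps)
          have "x - (u1 + u2) \<in> U" using x u1 u2 A(12) vec.subspace_add vec.subspace_diff by blast
          then have "c1 + c2 = 0"
          proof (rule contrapos_pp)
            assume "c1 + c2 \<noteq> 0"
            then have li: "inverse (c1 + c2) * (c1 + c2) = 1" by simp
            have "p = inverse (c1 + c2) *s (x - (u1 + u2))" unfolding xe
              by (simp only: vec.scale_scale li vec.scale_one)
            moreover have "x - (u1 + u2) \<in> U \<Longrightarrow> inverse (c1 + c2) *s (x - (u1 + u2)) \<in> U"
              using A(12) vec.subspace_scale by blast
            ultimately show "x - (u1 + u2) \<notin> U" using pU by auto
          qed
          then have "x = u1 + u2" using xe by simp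
          moreover have "u1 \<in> vec.span (S i \<union> S j)" "u2 \<in> vec.span (S i \<union> S j)"
            using u1S u2S vec.span_base by blast+
          then have "u1 + u2 \<in> vec.span (S i \<union> S j)" using vec.span_add by blast
          ultimately show "x \<in> vec.span (S i \<union> S j)" by simp
        qed
      qed
      define W where "W = vec.span (S i \<union> S j) \<inter> H"
      have Weq: "W = V \<inter> U \<inter> {v. polar Q p v = 0}" unfolding W_def spanSS H_def K_def by blast
      have sW: "vec.subspace W" unfolding W_def using sH vec.subspace_inter vec.subspace_span by blast
      have pVK: "p \<in> V \<inter> K" using pV pK by blast
      have sVK: "vec.subspace (V \<inter> K)" using sV sK vec.subspace_inter by blast
      have "vec.dim (V \<inter> K) + 1 = 2 * g" using splitK[OF sV w1] dimV by simp
      moreover have "vec.dim (V \<inter> K \<inter> U) + 1 = vec.dim (V \<inter> K)" using splitU[OF sVK pVK] .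
      moreover have "V \<inter> K \<inter> U = W" unfolding Weq K_def by blast
      ultimately have dimW: "vec.dim W + 2 = 2 * g" by simp
      have "vec.dim (S i \<inter> H \<inter> (S j \<inter> H)) \<le> vec.dim (S i \<inter> H)" by (rule vec.dim_subset) blast
      then have g2': "g \<ge> 2" using d dimSH[OF i] by simp
      have SiW: "S i \<inter> H \<subseteq> W" unfolding W_def using vec.span_base by blast
      have wittW: "witt_index Q W = g - 1"
      proof (rule witt_eq[OF _ sSH SiW tsSH[OF i] dimSH[OF i]])
        fix G assume "vec.subspace G" "G \<subseteq> W" "totally_singular Q G"
        moreover have "W \<subseteq> H" unfolding W_def by blast
        ultimately show "vec.dim G \<le> g - 1" using Hbound by fastforce
      qed
      have ndW: "nondeg_on Q W" unfolding Weq
        by (rule ndg[OF sV ndV pV Qp w1(1) w1(2) A(12) pU dec])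
      have ar1: "r - e + 1 = 2 * g - 2" using g2 g2' e2 by linarith
      have ar2: "odd (r - e + 0)" using g2 g2' e2 oddre by presburger
      have ar3: "(r - e + 1 - 0) div 2 = g - 1" using ar1 by simp
      show ?thesis unfolding quadric_type_def W_def[symmetric]
        using sW dimW ndW wittW ar1 ar2 ar3 by simp
    qed
    show ?thesis using d1 d2 c3 by blast
  qed
  have HUK: "v \<notin> H \<Longrightarrow> v \<in> U \<Longrightarrow> polar Q p v \<noteq> 0" for v unfolding H_def K_def by blast
  define D where "D i = S i - H" for i
  have cardD: "card (D i) = q ^ g - q ^ (g - 1)" if i: "i \<in> {1..N}" for i
  proof -
    have "D i = S i - (S i \<inter> H)" unfolding D_def by blast
    then have "card (D i) = card (S i) - card (S i \<inter> H)" by (simp add: card_Diff_subset)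
    then show ?thesis using card_subspace[OF sS[of i]] card_subspace[OF sSH[of i]] dimS[OF i] dimSH[OF i]
      unfolding q_def by simp
  qed
  have cardUH: "card (U - H) = q ^ (r + 2) - q ^ (r + 1)"
  proof -
    have "card (U - H) = card U - card H" using HU by (simp add: card_Diff_subset)
    then show ?thesis using card_subspace[OF A(12)] card_subspace[OF sH] A(13) dimH unfolding q_def by simp
  qed
  have cardUN: "card (\<Union>i\<in>{1..N}. D i) = (\<Sum>i\<in>{1..N}. card (D i))"
  proof (rule card_UN_disjoint)
    show "finite {1..N}" by simp
    show "\<forall>i\<in>{1..N}. finite (D i)" by simp
    show "\<forall>i\<in>{1..N}. \<forall>j\<in>{1..N}. i \<noteq> j \<longrightarrow> D i \<inter> D j = {}"
    proof (intro ballI impI)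
      fix i j assume i: "i \<in> {1..N}" and j: "j \<in> {1..N}" and ij: "i \<noteq> j"
      show "D i \<inter> D j = {}"
      proof (rule ccontr)
        assume "D i \<inter> D j \<noteq> {}"
        then obtain v where v: "v \<in> S i" "v \<in> S j" "v \<notin> H" unfolding D_def by blast
        have "v \<in> U" using v unfolding S_def by blast
        then show False using uniq[OF i j ij v(1) v(2)] HUK v(3) by blast
      qed
    qed
  qed
  have q1: "q \<ge> 1" unfolding q_def by (simp add: Suc_leI)
  have numeq: "N * (q ^ g - q ^ (g - 1)) = q ^ (r + 2) - q ^ (r + 1)"
  proof -
    have qg: "q ^ g = q * q ^ (g - 1)" using g1 by (metis Suc_diff_1 less_le_trans zero_less_one power_Suc)
    have "q ^ g - q ^ (g - 1) = (q - 1) * q ^ (g - 1)" unfolding qg by (simp add: diff_mult_distrib)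
    then have "N * (q ^ g - q ^ (g - 1)) = (q - 1) * (q ^ ((r + e + 1) div 2) * q ^ (g - 1))"
      using A(6) unfolding q_def by simp
    also have "\<dots> = (q - 1) * q ^ (r + 1)" using tg by (simp add: power_add[symmetric])
    also have "\<dots> = q ^ (r + 2) - q ^ (r + 1)" by (simp add: diff_mult_distrib)
    finally show ?thesis .
  qed
  have UNsub: "(\<Union>i\<in>{1..N}. D i) \<subseteq> U - H" unfolding D_def S_def by blast
  have UNeq: "(\<Union>i\<in>{1..N}. D i) = U - H"
  proof (rule card_subset_eq[OF _ UNsub])
    show "finite (U - H)" by simp
    show "card (\<Union>i\<in>{1..N}. D i) = card (U - H)" using cardUN cardD cardUH numeq by simp
  qed
  have cover: "\<exists>i. i \<in> {1..N} \<and> v \<in> S i" if "v \<in> U" "v \<notin> H" for v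
    using that UNeq unfolding D_def by blast
  have exu: "\<exists>!i. i \<in> {1..N} \<and> v \<in> S i" if v: "v \<in> U" "v \<notin> H" for v
  proof -
    obtain i where i: "i \<in> {1..N}" "v \<in> S i" using cover[OF v] by blast
    show ?thesis
    proof (rule ex1I[of _ i])
      show "i \<in> {1..N} \<and> v \<in> S i" using i by blast
      fix j assume j: "j \<in> {1..N} \<and> v \<in> S j"
      show "j = i"
      proof (rule ccontr)
        assume "j \<noteq> i"
        then show False using uniq[OF i(1) _ _ i(2), of j] j HUK v by blast
      qed
    qed
  qed
  have Seq: "(\<lambda>i. vec.span (P \<union> Sigma i) \<inter> U) = S" unfolding S_def T_def by simp
  have Heq: "U \<inter> perp Q P = H" unfolding perpK H_def ..
  have Pi0eq': "Sigma (N + 1) \<inter> (U \<inter> perp Q P) = Pi0" unfolding Heq Pi0_def ..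
  show ?thesis
    unfolding Seq Heq Pi0_def[symmetric] quadric_avsp_def
  proof (intro conjI)
    show "N = CARD('a) ^ ((r + e + 1) div 2)" by (rule A(6))
    show "vec.dim U = r + 2" by (rule A(13))
    show "avsp U H S {1..N}" unfolding avsp_def
      using A(12) sH HU dimH A(13) sS SnotH exu unfolding S_def by auto
    show "quadric_type Q H r e" unfolding quadric_type_def using e2 oddre sH dimH ndH wittH gH by simp
    show "generator Q H Pi0" unfolding generator_def using sPi0 Pi0H tsPi0 dimPi0 wittH by simp
    show "\<forall>i\<in>{1..N}. vec.dim (S i) = (r + 3 - e) div 2 \<and> generator Q H (S i \<inter> H) \<and> S i \<inter> H \<inter> Pi0 = {0}"
      unfolding generator_def g_def[symmetric] using dimS sSH tsSH dimSH wittH SHPi0 by auto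
    show "\<forall>i\<in>{1..N}. \<forall>j\<in>{1..N}. i \<noteq> j \<longrightarrow> vec.dim (S i \<inter> S j) \<le> 1 \<and> vec.dim (S i \<inter> H \<inter> (S j \<inter> H)) \<le> 1"
      using pair by blast
    show "\<forall>i\<in>{1..N}. \<forall>j\<in>{1..N}. i \<noteq> j \<longrightarrow> vec.dim (S i \<inter> H \<inter> (S j \<inter> H)) = 1 \<longrightarrow>
        quadric_type Q (vec.span (S i \<union> S j) \<inter> H) (r - e) 0"
      using pair by blast
  qed
qed

end
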